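(* Let $\Gamma$ be a countably infinite residually finite group and $\{\Gamma_n\}_{n\in\mathbb N}$ a strictly decreasing sequence of finite-index normal subgroups with $\bigcap_n\Gamma_n=\{e_\Gamma\}$. Let $X=\varprojlim\Gamma/\Gamma_n$ with left translation action of $\Gamma\subseteq X$ and quotient maps $\pi_n:X\to\Gamma/\Gamma_n$. For each $n\ge2$ pick $\gamma_n\in\Gamma_{n-1}\setminus\Gamma_n$ and set $C_n=\pi_n^{-1}(\gamma_n\Gamma_n)$. Put $X_+=\bigcup_{n\ge2}C_n$ and $X_-=X\setminus(X_+\cup\{e_\Gamma\})$. Then every independence set $M\subseteq\Gamma$ for $(X_+,X_-)$ has cardinality at most $5$.
   Context: $X=\varprojlim\Gamma/\Gamma_n$ is the set of $(x_n)\in\prod_n\Gamma/\Gamma_n$ compatible under the natural maps $\Gamma/\Gamma_{n+1}\to\Gamma/\Gamma_n$, a compact metrizable group containing $\Gamma$ as a dense subgroup. A set $M\subseteq\Gamma$ is an independence set for $(A_1,A_2)$ if $\bigcap_{s\in F}s^{-1}A_{\omega(s)}\ne\emptyset$ for every nonempty finite $F\subseteq M$ and every $\omega\in\{1,2\}^F$. *)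

theory Defs
  imports "HOL-Algebra.Coset" "HOL-Library.Countable_Set"
begin

definition residually_finite :: "('a, 'b) monoid_scheme \<Rightarrow> bool" where
  "residually_finite G \<longleftrightarrow>
     (\<forall>g\<in>carrier G. g \<noteq> \<one>\<^bsub>G\<^esub> \<longrightarrow>
        (\<exists>N. N \<lhd> G \<and> finite (rcosets\<^bsub>G\<^esub> N) \<and> g \<notin> N))"

text \<open>A point is a compatible sequence of
  cosets x n \<in> G/Gamma_n; compatibility under Gamma/Gamma_{n+1} \<rightarrow> Gamma/Gamma_n
  means x (n+1) \<subseteq> x n.  The unused index 0 is normalised to the whole carrier.\<close>
definition invlim :: "('a, 'b) monoid_scheme \<Rightarrow> (nat \<Rightarrow> 'a set) \<Rightarrow> (nat \<Rightarrow> 'a set) set" where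
  "invlim G \<Gamma> = {x. x 0 = carrier G \<and>
      (\<forall>n\<ge>1. x n \<in> rcosets\<^bsub>G\<^esub> (\<Gamma> n) \<and> x (Suc n) \<subseteq> x n)}"

definition embed :: "('a, 'b) monoid_scheme \<Rightarrow> (nat \<Rightarrow> 'a set) \<Rightarrow> 'a \<Rightarrow> nat \<Rightarrow> 'a set" where
  "embed G \<Gamma> g = (\<lambda>n. if n = 0 then carrier G else g <#\<^bsub>G\<^esub> \<Gamma> n)"

definition act :: "('a, 'b) monoid_scheme \<Rightarrow> 'a \<Rightarrow> (nat \<Rightarrow> 'a set) \<Rightarrow> nat \<Rightarrow> 'a set" where
  "act G s x = (\<lambda>n. s <#\<^bsub>G\<^esub> x n)"

definition Xplus :: "('a, 'b) monoid_scheme \<Rightarrow> (nat \<Rightarrow> 'a set) \<Rightarrow> (nat \<Rightarrow> 'a) \<Rightarrow> (nat \<Rightarrow> 'a set) set" where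
  "Xplus G \<Gamma> \<gamma> = (\<Union>n\<in>{2..}. {x \<in> invlim G \<Gamma>. x n = \<gamma> n <#\<^bsub>G\<^esub> \<Gamma> n})"

definition Xminus :: "('a, 'b) monoid_scheme \<Rightarrow> (nat \<Rightarrow> 'a set) \<Rightarrow> (nat \<Rightarrow> 'a) \<Rightarrow> (nat \<Rightarrow> 'a set) set" where
  "Xminus G \<Gamma> \<gamma> = invlim G \<Gamma> - (Xplus G \<Gamma> \<gamma> \<union> {embed G \<Gamma> \<one>\<^bsub>G\<^esub>})"

text \<open>Independence set for a pair (A1, A2) of subsets of X under an action;
  omega \<in> {1,2}^F is encoded as a boolean-valued function (True = 1, False = 2).\<close>
definition indep_set :: "'x set \<Rightarrow> ('g \<Rightarrow> 'x \<Rightarrow> 'x) \<Rightarrow> 'x set \<Rightarrow> 'x set \<Rightarrow> 'g set \<Rightarrow> bool" where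
  "indep_set X T A1 A2 M \<longleftrightarrow>
     (\<forall>F (\<omega> :: 'g \<Rightarrow> bool). F \<subseteq> M \<longrightarrow> F \<noteq> {} \<longrightarrow> finite F \<longrightarrow>
        (\<Inter>s\<in>F. {x \<in> X. T s x \<in> (if \<omega> s then A1 else A2)}) \<noteq> {})"

end

theory Submission
  imports Defs
begin

definition plev :: "('a,'b) monoid_scheme \<Rightarrow> (nat \<Rightarrow> 'a set) \<Rightarrow> (nat \<Rightarrow> 'a) \<Rightarrow> 'a \<Rightarrow> (nat \<Rightarrow> 'a set) \<Rightarrow> bool" where
  "plev G \<Gamma> \<gamma> a x \<longleftrightarrow> (\<exists>n\<ge>2. x n = \<Gamma> n #>\<^bsub>G\<^esub> (a \<otimes>\<^bsub>G\<^esub> \<gamma> n))"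

locale lsetting = group G for G (structure) +
  fixes \<Gamma> :: "nat \<Rightarrow> 'a set" and \<gamma> :: "nat \<Rightarrow> 'a"
  assumes nrm: "1 \<le> n \<Longrightarrow> \<Gamma> n \<lhd> G"
    and chain: "1 \<le> n \<Longrightarrow> \<Gamma> (Suc n) \<subseteq> \<Gamma> n"
    and gam: "2 \<le> n \<Longrightarrow> \<gamma> n \<in> \<Gamma> (n - 1)"
    and gam2: "2 \<le> n \<Longrightarrow> \<gamma> n \<notin> \<Gamma> n"
begin

abbreviation "X \<equiv> invlim G \<Gamma>"
abbreviation "Pl \<equiv> plev G \<Gamma> \<gamma>"

lemma sg: "1 \<le> n \<Longrightarrow> subgroup (\<Gamma> n) G"
  using nrm normal_imp_subgroup by blast

lemma gam_carr: assumes "2 \<le> n" shows "\<gamma> n \<in> carrier G"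
proof -
  have "1 \<le> n - 1" using assms by simp
  then show ?thesis using gam[OF assms] subgroup.mem_carrier[OF sg] by blast
qed

lemma Gmono: assumes "1 \<le> k" "k \<le> n" shows "\<Gamma> n \<subseteq> \<Gamma> k"
  using assms(2) proof (induction n rule: dec_induct)
  case base then show ?case by simp
next
  case (step n) then show ?case using chain[of n] assms by auto
qed

lemma xchain: assumes "x \<in> X" "1 \<le> k" "k \<le> n" shows "x n \<subseteq> x k"
  using assms(3) proof (induction n rule: dec_induct)
  case base then show ?case by simp
next
  case (step m)
  have "1 \<le> m" using step(1) assms(2) by simp
  then have "x (Suc m) \<subseteq> x m" using assms(1) unfolding invlim_def by blast
  then show ?case using step(3) by blast
qed

lemma xcos: "x \<in> X \<Longrightarrow> 1 \<le> n \<Longrightarrow> \<exists>g\<in>carrier G. x n = \<Gamma> n #> g"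
  unfolding invlim_def RCOSETS_def by auto

lemma lr: "1 \<le> n \<Longrightarrow> g \<in> carrier G \<Longrightarrow> g <# \<Gamma> n = \<Gamma> n #> g"
  using normal.coset_eq[OF nrm[of n]] by auto

lemma D1:
  assumes "x \<in> X" "1 \<le> k" "k \<le> n" "g \<in> carrier G" "x n = \<Gamma> n #> g"
  shows "x k = \<Gamma> k #> g"
proof -
  obtain h where h: "h \<in> carrier G" "x k = \<Gamma> k #> h" using xcos assms by blast
  have "g \<in> x n" using assms rcos_self sg by auto
  then have "g \<in> \<Gamma> k #> h" using xchain[OF assms(1-3)] h by auto
  then show ?thesis using repr_independence[of g "\<Gamma> k" h] h sg assms by auto
qed

lemma Emono:
  assumes "1 \<le> k" "k \<le> n" "a \<in> carrier G" "b \<in> carrier G" "\<Gamma> n #> a = \<Gamma> n #> b"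
  shows "\<Gamma> k #> a = \<Gamma> k #> b"
proof -
  have n1: "1 \<le> n" using assms by simp
  have "a \<in> \<Gamma> n #> a" by (rule rcos_self[OF assms(3) sg[OF n1]])
  then have "a \<in> \<Gamma> n #> b" using assms(5) by simp
  then have "a \<in> \<Gamma> k #> b" using Gmono[OF assms(1,2)] unfolding r_coset_def by auto
  then show ?thesis using repr_independence[of a "\<Gamma> k" b] sg assms by auto
qed

lemma D3:
  assumes "1 \<le> n" "a \<in> carrier G" "b \<in> carrier G" "g \<in> carrier G"
    "\<Gamma> n #> (a \<otimes> g) = \<Gamma> n #> (b \<otimes> g)"
  shows "\<Gamma> n #> a = \<Gamma> n #> b"
proof -
  have s: "\<Gamma> n \<subseteq> carrier G" using sg[OF assms(1)] subgroup.subset by blast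
  have "(\<Gamma> n #> (a \<otimes> g)) #> inv g = (\<Gamma> n #> (b \<otimes> g)) #> inv g" using assms by simp
  moreover have "(\<Gamma> n #> (a \<otimes> g)) #> inv g = \<Gamma> n #> a"
    using assms(1-4) s by (simp add: coset_mult_assoc m_assoc)
  moreover have "(\<Gamma> n #> (b \<otimes> g)) #> inv g = \<Gamma> n #> b"
    using assms(1-4) s by (simp add: coset_mult_assoc m_assoc)
  ultimately show ?thesis by simp
qed

lemma D3r:
  assumes "1 \<le> n" "a \<in> carrier G" "b \<in> carrier G" "g \<in> carrier G"
    "\<Gamma> n #> a = \<Gamma> n #> b"
  shows "\<Gamma> n #> (a \<otimes> g) = \<Gamma> n #> (b \<otimes> g)"
proof -
  have s: "\<Gamma> n \<subseteq> carrier G" using sg[OF assms(1)] subgroup.subset by blast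
  have "\<Gamma> n #> (a \<otimes> g) = (\<Gamma> n #> a) #> g" using coset_mult_assoc[OF s assms(2,4)] by simp
  moreover have "\<Gamma> n #> (b \<otimes> g) = (\<Gamma> n #> b) #> g" using coset_mult_assoc[OF s assms(3,4)] by simp
  ultimately show ?thesis using assms(5) by simp
qed

lemma D4:
  assumes "2 \<le> n" "a \<in> carrier G"
  shows "\<Gamma> n #> (a \<otimes> \<gamma> n) \<noteq> \<Gamma> n #> a"
proof
  assume e: "\<Gamma> n #> (a \<otimes> \<gamma> n) = \<Gamma> n #> a"
  have n1: "1 \<le> n" using assms by simp
  have gc: "\<gamma> n \<in> carrier G" using gam_carr assms by simp
  have s: "\<Gamma> n \<subseteq> carrier G" using sg[OF n1] subgroup.subset by blast
  have "a <# (\<gamma> n <# \<Gamma> n) = a <# \<Gamma> n"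
  proof -
    have "(a \<otimes> \<gamma> n) <# \<Gamma> n = \<Gamma> n #> (a \<otimes> \<gamma> n)" using lr[OF n1] assms gc by simp
    moreover have "a <# \<Gamma> n = \<Gamma> n #> a" using lr[OF n1] assms by simp
    moreover have "a <# (\<gamma> n <# \<Gamma> n) = (a \<otimes> \<gamma> n) <# \<Gamma> n" using lcos_m_assoc[OF s assms(2) gc] .
    ultimately show ?thesis using e by simp
  qed
  then have "inv a <# (a <# (\<gamma> n <# \<Gamma> n)) = inv a <# (a <# \<Gamma> n)" by simp
  then have e2: "\<gamma> n <# \<Gamma> n = \<Gamma> n"
  proof -
    have "inv a \<otimes> (a \<otimes> \<gamma> n) = \<gamma> n" using assms gc by (simp add: m_assoc[symmetric])
    then show ?thesis using \<open>inv a <# (a <# (\<gamma> n <# \<Gamma> n)) = inv a <# (a <# \<Gamma> n)\<close> assms gc s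
      by (simp add: lcos_m_assoc l_coset_subset_G lcos_mult_one)
  qed
  have "\<gamma> n \<in> \<gamma> n <# \<Gamma> n" unfolding l_coset_def
    using subgroup.one_closed[OF sg[OF n1]] gc by force
  then show False using e2 gam2 assms by auto
qed

lemma D5:
  assumes "2 \<le> n" "1 \<le> k" "k \<le> n - 1" "a \<in> carrier G"
  shows "\<Gamma> k #> (a \<otimes> \<gamma> n) = \<Gamma> k #> a"
proof -
  have gc: "\<gamma> n \<in> carrier G" using gam_carr assms by simp
  have gk: "\<gamma> n \<in> \<Gamma> k" using gam[OF assms(1)] Gmono[of k "n-1"] assms by auto
  have s: "\<Gamma> k \<subseteq> carrier G" using sg[OF assms(2)] subgroup.subset by blast
  have "(a \<otimes> \<gamma> n) <# \<Gamma> k = a <# (\<gamma> n <# \<Gamma> k)" using lcos_m_assoc assms gc s by simp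
  also have "\<dots> = a <# \<Gamma> k" using coset_join3[OF gc sg[OF assms(2)] gk] by simp
  finally show ?thesis using lr[OF assms(2)] assms gc by simp
qed

lemma Llow:
  assumes "x \<in> X" "2 \<le> n" "x n = \<Gamma> n #> (a \<otimes> \<gamma> n)" "1 \<le> k" "k \<le> n - 1" "a \<in> carrier G"
  shows "x k = \<Gamma> k #> a"
  using D1[OF assms(1,4) _ _ assms(3)] D5[OF assms(2,4,5,6)] assms gam_carr by simp

lemma Lhigh:
  assumes "x \<in> X" "2 \<le> n" "x n = \<Gamma> n #> (a \<otimes> \<gamma> n)" "n \<le> k" "a \<in> carrier G"
  shows "x k \<noteq> \<Gamma> k #> a"
proof
  assume "x k = \<Gamma> k #> a"
  then have "x n = \<Gamma> n #> a" using D1[OF assms(1) _ assms(4) assms(5)] assms by simp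
  then show False using D4[OF assms(2,5)] assms by simp
qed

lemma Transfer:
  assumes "2 \<le> n" "x n = \<Gamma> n #> (a \<otimes> \<gamma> n)" "\<Gamma> n #> a = \<Gamma> n #> b"
    "a \<in> carrier G" "b \<in> carrier G"
  shows "Pl b x"
  unfolding plev_def using D3r[OF _ assms(4,5) gam_carr[OF assms(1)] assms(3)] assms by auto

lemma Level1:
  assumes "x \<in> X" "Pl a x" "a \<in> carrier G"
  shows "x 1 = \<Gamma> 1 #> a"
proof -
  obtain n where n: "2 \<le> n" "x n = \<Gamma> n #> (a \<otimes> \<gamma> n)" using assms(2) unfolding plev_def by auto
  show ?thesis using Llow[OF assms(1) n, of 1] n(1) assms(3) by simp
qed

lemma caseB_aux:
  assumes "z \<in> X" "Pl a z" "\<not> Pl a' z" "1 \<le> m" "a \<in> carrier G" "a' \<in> carrier G"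
    "\<Gamma> (m+1) #> a = \<Gamma> (m+1) #> a'"
  shows "z (m+1) = \<Gamma> (m+1) #> a"
proof -
  obtain n where n: "2 \<le> n" "z n = \<Gamma> n #> (a \<otimes> \<gamma> n)" using assms(2) unfolding plev_def by auto
  show ?thesis
  proof (cases "n \<le> m + 1")
    case True
    then have "\<Gamma> n #> a = \<Gamma> n #> a'" using Emono[of n "m+1" a a'] assms n by simp
    then have "Pl a' z" using Transfer[where x=z, OF n] assms by simp
    then show ?thesis using assms by simp
  next
    case False
    then show ?thesis using Llow[OF assms(1) n, of "m+1"] assms by simp
  qed
qed

lemma caseB:
  assumes "1 \<le> m" "a \<in> carrier G" "a' \<in> carrier G" "b \<in> carrier G"
    "\<Gamma> m #> a = \<Gamma> m #> b" "\<Gamma> (m+1) #> a = \<Gamma> (m+1) #> a'" "\<Gamma> (m+1) #> a \<noteq> \<Gamma> (m+1) #> b"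
    and x: "x \<in> X" "Pl a x" "\<not> Pl a' x" "\<not> Pl b x"
    and y: "y \<in> X" "Pl a y" "\<not> Pl a' y" "Pl b y"
  shows False
proof -
  have xm: "x (m+1) = \<Gamma> (m+1) #> a" using caseB_aux[OF x(1-3) assms(1-3,6)] .
  have ym: "y (m+1) = \<Gamma> (m+1) #> a" using caseB_aux[OF y(1-3) assms(1-3,6)] .
  have m2: "2 \<le> m + 1" using assms by simp
  have nx: "x (m+1) \<noteq> \<Gamma> (m+1) #> (b \<otimes> \<gamma> (m+1))"
    using x(4) m2 unfolding plev_def by blast
  obtain n where n: "2 \<le> n" "y n = \<Gamma> n #> (b \<otimes> \<gamma> n)" using y(4) unfolding plev_def by auto
  consider "n = m + 1" | "m + 2 \<le> n" | "n \<le> m" by linarith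
  then show False
  proof cases
    case 1 then show ?thesis using xm ym nx n by simp
  next
    case 2 then show ?thesis using Llow[OF y(1) n, of "m+1"] ym assms by simp
  next
    case 3
    have "y n = \<Gamma> n #> a" using D1[OF y(1) _ _ assms(2) ym, of n] 3 n by simp
    moreover have "\<Gamma> n #> a = \<Gamma> n #> b" using Emono[of n m a b] 3 n assms by simp
    ultimately show ?thesis using Lhigh[OF y(1) n, of n] assms by simp
  qed
qed

lemma caseA_aux:
  assumes "x \<in> X" "Pl e x" "\<not> Pl z x" "1 \<le> m" "e \<in> carrier G" "z \<in> carrier G"
    "\<Gamma> m #> e = \<Gamma> m #> z"
  shows "x (m+1) = \<Gamma> (m+1) #> e \<or> x (m+1) = \<Gamma> (m+1) #> (e \<otimes> \<gamma> (m+1))"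
proof -
  obtain n where n: "2 \<le> n" "x n = \<Gamma> n #> (e \<otimes> \<gamma> n)" using assms(2) unfolding plev_def by auto
  consider "n = m + 1" | "m + 2 \<le> n" | "n \<le> m" by linarith
  then show ?thesis
  proof cases
    case 1 then show ?thesis using n by simp
  next
    case 2 then show ?thesis using Llow[OF assms(1) n, of "m+1"] assms by simp
  next
    case 3
    then have "\<Gamma> n #> e = \<Gamma> n #> z" using Emono[of n m e z] assms n by simp
    then have "Pl z x" using Transfer[where x=x, OF n] assms by simp
    then show ?thesis using assms by simp
  qed
qed

lemma caseA:
  assumes "1 \<le> m" "p \<in> carrier G" "q \<in> carrier G" "r \<in> carrier G" "z \<in> carrier G"
    "\<Gamma> m #> p = \<Gamma> m #> z" "\<Gamma> m #> q = \<Gamma> m #> z" "\<Gamma> m #> r = \<Gamma> m #> z"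
    "\<Gamma> (m+1) #> p \<noteq> \<Gamma> (m+1) #> q" "\<Gamma> (m+1) #> p \<noteq> \<Gamma> (m+1) #> r"
    "\<Gamma> (m+1) #> q \<noteq> \<Gamma> (m+1) #> r"
    and x: "x \<in> X" "Pl p x" "Pl q x" "Pl r x" "\<not> Pl z x"
  shows False
proof -
  have m1: "1 \<le> m + 1" by simp
  have gc: "\<gamma> (m+1) \<in> carrier G" using gam_carr assms by simp
  have hp: "x (m+1) = \<Gamma> (m+1) #> p \<or> x (m+1) = \<Gamma> (m+1) #> (p \<otimes> \<gamma> (m+1))"
    using caseA_aux[OF x(1,2,5) assms(1,2,5,6)] .
  have hq: "x (m+1) = \<Gamma> (m+1) #> q \<or> x (m+1) = \<Gamma> (m+1) #> (q \<otimes> \<gamma> (m+1))"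
    using caseA_aux[OF x(1,3,5) assms(1,3,5,7)] .
  have hr: "x (m+1) = \<Gamma> (m+1) #> r \<or> x (m+1) = \<Gamma> (m+1) #> (r \<otimes> \<gamma> (m+1))"
    using caseA_aux[OF x(1,4,5) assms(1,4,5,8)] .
  have dpq: "\<Gamma> (m+1) #> (p \<otimes> \<gamma> (m+1)) \<noteq> \<Gamma> (m+1) #> (q \<otimes> \<gamma> (m+1))"
    using D3[OF m1 assms(2,3) gc] assms(9) by blast
  have dpr: "\<Gamma> (m+1) #> (p \<otimes> \<gamma> (m+1)) \<noteq> \<Gamma> (m+1) #> (r \<otimes> \<gamma> (m+1))"
    using D3[OF m1 assms(2,4) gc] assms(10) by blast
  have dqr: "\<Gamma> (m+1) #> (q \<otimes> \<gamma> (m+1)) \<noteq> \<Gamma> (m+1) #> (r \<otimes> \<gamma> (m+1))"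
    using D3[OF m1 assms(3,4) gc] assms(11) by blast
  show False using hp hq hr
    by (elim disjE) (use dpq dpr dqr assms(9-11) in \<open>simp_all\<close>)
qed

lemma plus_lem:
  assumes "x \<in> X" "s \<in> carrier G" "act G s x \<in> Xplus G \<Gamma> \<gamma>"
  shows "Pl (inv s) x"
proof -
  obtain n where n: "2 \<le> n" "s <# x n = \<gamma> n <# \<Gamma> n"
    using assms(3) unfolding Xplus_def act_def by auto
  have n1: "1 \<le> n" using n by simp
  have gc: "\<gamma> n \<in> carrier G" using gam_carr n by simp
  have s: "\<Gamma> n \<subseteq> carrier G" using sg[OF n1] subgroup.subset by blast
  have xs: "x n \<subseteq> carrier G" using xcos[OF assms(1) n1] s r_coset_subset_G by metis
  have "x n = inv s <# (s <# x n)" using xs assms by (simp add: lcos_m_assoc lcos_mult_one)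
  also have "\<dots> = (inv s \<otimes> \<gamma> n) <# \<Gamma> n" using n assms gc s by (simp add: lcos_m_assoc)
  also have "\<dots> = \<Gamma> n #> (inv s \<otimes> \<gamma> n)" using lr[OF n1] assms gc by simp
  finally show ?thesis unfolding plev_def using n by auto
qed

lemma minus_lem:
  assumes "x \<in> X" "s \<in> carrier G" "act G s x \<in> Xminus G \<Gamma> \<gamma>"
  shows "\<not> Pl (inv s) x"
proof
  assume "Pl (inv s) x"
  then obtain n where n: "2 \<le> n" "x n = \<Gamma> n #> (inv s \<otimes> \<gamma> n)" unfolding plev_def by auto
  have n1: "1 \<le> n" using n by simp
  have gc: "\<gamma> n \<in> carrier G" using gam_carr n by simp
  have s: "\<Gamma> n \<subseteq> carrier G" using sg[OF n1] subgroup.subset by blast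
  have "s <# x n = s <# ((inv s \<otimes> \<gamma> n) <# \<Gamma> n)" using n lr[OF n1] assms gc by simp
  also have "\<dots> = \<gamma> n <# \<Gamma> n" using assms gc s by (simp add: lcos_m_assoc m_assoc[symmetric])
  finally have "act G s x n = \<gamma> n <# \<Gamma> n" unfolding act_def by simp
  moreover have "act G s x \<in> X" using assms(3) unfolding Xminus_def by auto
  ultimately have "act G s x \<in> Xplus G \<Gamma> \<gamma>" unfolding Xplus_def using n by auto
  then show False using assms(3) unfolding Xminus_def by auto
qed

lemma four:
  assumes c: "a1 \<in> carrier G" "a2 \<in> carrier G" "a3 \<in> carrier G" "a4 \<in> carrier G"
    and d: "a1 \<noteq> a2"
    and inter: "(\<Inter>n\<in>{1..}. \<Gamma> n) = {\<one>}"
    and pat: "\<And>w1 w2 w3 w4. \<exists>x\<in>X. Pl a1 x = w1 \<and> Pl a2 x = w2 \<and> Pl a3 x = w3 \<and> Pl a4 x = w4"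
  shows False
proof -
  define AE where "AE n \<longleftrightarrow> \<Gamma> n #> a1 = \<Gamma> n #> a2 \<and> \<Gamma> n #> a1 = \<Gamma> n #> a3 \<and> \<Gamma> n #> a1 = \<Gamma> n #> a4" for n
  have AE1: "AE 1"
  proof -
    obtain x where "x \<in> X" "Pl a1 x" "Pl a2 x" "Pl a3 x" "Pl a4 x" using pat[of True True True True] by auto
    then have "x 1 = \<Gamma> 1 #> a1" "x 1 = \<Gamma> 1 #> a2" "x 1 = \<Gamma> 1 #> a3" "x 1 = \<Gamma> 1 #> a4"
      using Level1 c by blast+
    then show ?thesis unfolding AE_def by simp
  qed
  have "\<exists>N. 1 \<le> N \<and> \<not> AE N"
  proof -
    have "a1 \<otimes> inv a2 \<noteq> \<one>"
    proof
      assume eq: "a1 \<otimes> inv a2 = \<one>"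
      have "a1 = (a1 \<otimes> inv a2) \<otimes> a2" using c by (simp add: m_assoc)
      then show False using eq d c by simp
    qed
    then have "a1 \<otimes> inv a2 \<notin> (\<Inter>n\<in>{1..}. \<Gamma> n)" using inter by auto
    then obtain N where N: "1 \<le> N" "a1 \<otimes> inv a2 \<notin> \<Gamma> N" by auto
    have "\<Gamma> N #> a1 \<noteq> \<Gamma> N #> a2"
    proof
      assume "\<Gamma> N #> a1 = \<Gamma> N #> a2"
      then have "a1 \<in> \<Gamma> N #> a2" using rcos_self[OF c(1) sg[OF N(1)]] by simp
      then show False using subgroup.rcos_module[OF sg[OF N(1)] is_group c(2,1)] N by simp
    qed
    then show ?thesis unfolding AE_def using N by auto
  qed
  define N0 where "N0 = (LEAST n. 1 \<le> n \<and> \<not> AE n)"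
  have N0: "1 \<le> N0" "\<not> AE N0" using LeastI_ex[OF \<open>\<exists>N. 1 \<le> N \<and> \<not> AE N\<close>] unfolding N0_def by auto
  have "N0 \<noteq> 1" using N0 AE1 by auto
  define m where "m = N0 - 1"
  have m1: "1 \<le> m" using N0 \<open>N0 \<noteq> 1\<close> unfolding m_def by simp
  have "AE m" using not_less_Least[of m "\<lambda>n. 1 \<le> n \<and> \<not> AE n"] m1 N0 unfolding m_def N0_def by simp
  have nAE: "\<not> AE (m+1)" using N0 \<open>N0 \<noteq> 1\<close> unfolding m_def by simp
  have e12: "\<Gamma> m #> a1 = \<Gamma> m #> a2" and e13: "\<Gamma> m #> a1 = \<Gamma> m #> a3" and e14: "\<Gamma> m #> a1 = \<Gamma> m #> a4"
    using \<open>AE m\<close> unfolding AE_def by auto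
  show False
  proof (cases "\<Gamma> (m+1) #> a1 = \<Gamma> (m+1) #> a2")
    case False
    show ?thesis
    proof (cases "\<Gamma> (m+1) #> a1 = \<Gamma> (m+1) #> a3")
      case True
      obtain x where x: "x \<in> X" "Pl a1 x" "\<not> Pl a3 x" "\<not> Pl a2 x" using pat[of True False False True] by auto
      obtain y where y: "y \<in> X" "Pl a1 y" "\<not> Pl a3 y" "Pl a2 y" using pat[of True True False True] by auto
      show ?thesis using caseB[OF m1 c(1,3,2) e12 True False x y] .
    next
      case F13: False
      show ?thesis
      proof (cases "\<Gamma> (m+1) #> a2 = \<Gamma> (m+1) #> a3")
        case True
        obtain x where x: "x \<in> X" "Pl a2 x" "\<not> Pl a3 x" "\<not> Pl a1 x" using pat[of False True False True] by auto
        obtain y where y: "y \<in> X" "Pl a2 y" "\<not> Pl a3 y" "Pl a1 y" using pat[of True True False True] by auto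
        have "\<Gamma> m #> a2 = \<Gamma> m #> a1" using e12 by simp
        moreover have "\<Gamma> (m+1) #> a2 \<noteq> \<Gamma> (m+1) #> a1" using False by auto
        ultimately show ?thesis using caseB[OF m1 c(2,3,1) _ True _ x y] by blast
      next
        case F23: False
        obtain x where x: "x \<in> X" "Pl a1 x" "Pl a2 x" "Pl a3 x" "\<not> Pl a4 x" using pat[of True True True False] by auto
        have "\<Gamma> m #> a2 = \<Gamma> m #> a4" "\<Gamma> m #> a3 = \<Gamma> m #> a4" using e12 e13 e14 by simp_all
        then show ?thesis using caseA[OF m1 c(1,2,3,4) e14 _ _ False F13 F23 x] by blast
      qed
    qed
  next
    case True
    show ?thesis
    proof (cases "\<Gamma> (m+1) #> a1 = \<Gamma> (m+1) #> a3")
      case F13: False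
      obtain x where x: "x \<in> X" "Pl a1 x" "\<not> Pl a2 x" "\<not> Pl a3 x" using pat[of True False False True] by auto
      obtain y where y: "y \<in> X" "Pl a1 y" "\<not> Pl a2 y" "Pl a3 y" using pat[of True False True True] by auto
      show ?thesis using caseB[OF m1 c(1,2,3) e13 True F13 x y] .
    next
      case T13: True
      then have F14: "\<Gamma> (m+1) #> a1 \<noteq> \<Gamma> (m+1) #> a4" using nAE True unfolding AE_def by auto
      obtain x where x: "x \<in> X" "Pl a1 x" "\<not> Pl a2 x" "\<not> Pl a4 x" using pat[of True False True False] by auto
      obtain y where y: "y \<in> X" "Pl a1 y" "\<not> Pl a2 y" "Pl a4 y" using pat[of True False True True] by auto
      show ?thesis using caseB[OF m1 c(1,2,4) e14 True F14 x y] .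
    qed
  qed
qed

end

lemma card4_obtain:
  assumes "card F = 4"
  obtains s1 s2 s3 s4 where "F = {s1,s2,s3,s4}" "s1 \<noteq> s2" "s1 \<noteq> s3" "s1 \<noteq> s4"
    "s2 \<noteq> s3" "s2 \<noteq> s4" "s3 \<noteq> s4"
proof -
  have "card F = Suc (Suc (Suc (Suc 0)))" using assms by simp
  then obtain a B where 1: "F = insert a B" "a \<notin> B" "card B = Suc (Suc (Suc 0))"
    using card_eq_SucD by blast
  then obtain b C where 2: "B = insert b C" "b \<notin> C" "card C = Suc (Suc 0)"
    using card_eq_SucD by blast
  then obtain c D where 3: "C = insert c D" "c \<notin> D" "card D = Suc 0"
    using card_eq_SucD by blast
  then have "card D = 1" by simp
  then obtain d where 4: "D = {d}" by (rule card_1_singletonE)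
  show ?thesis
  proof (rule that[of a b c d])
    show "F = {a, b, c, d}" using 1(1) 2(1) 3(1) 4 by simp
    show "a \<noteq> b" "a \<noteq> c" "a \<noteq> d" using 1(2) 2(1) 3(1) 4 by simp_all
    show "b \<noteq> c" "b \<noteq> d" using 2(2) 3(1) 4 by simp_all
    show "c \<noteq> d" using 3(2) 4 by simp
  qed
qed

theorem lemma4p2:
  fixes G (structure) and \<Gamma> :: "nat \<Rightarrow> 'a set" and \<gamma> :: "nat \<Rightarrow> 'a" and M :: "'a set"
  assumes "group G"
    and "countable (carrier G)" and "infinite (carrier G)"
    and "residually_finite G"
    and "\<forall>n\<ge>1. \<Gamma> n \<lhd> G \<and> finite (rcosets (\<Gamma> n))"
    and "\<forall>n\<ge>1. \<Gamma> (Suc n) \<subset> \<Gamma> n"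
    and "(\<Inter>n\<in>{1..}. \<Gamma> n) = {\<one>}"
    and "\<forall>n\<ge>2. \<gamma> n \<in> \<Gamma> (n - 1) - \<Gamma> n"
    and "M \<subseteq> carrier G"
    and "indep_set (invlim G \<Gamma>) (act G) (Xplus G \<Gamma> \<gamma>) (Xminus G \<Gamma> \<gamma>) M"
  shows "finite M \<and> card M \<le> 5"
proof (rule ccontr)
  assume nf: "\<not> (finite M \<and> card M \<le> 5)"
  interpret L: lsetting G \<Gamma> \<gamma>
    apply (rule lsetting.intro[OF assms(1)])
    apply (rule lsetting_axioms.intro)
    using assms(5) apply blast
    using assms(6) apply blast
    using assms(8) apply blast
    using assms(8) by blast
  obtain F where F: "F \<subseteq> M" "finite F" "card F = 4"
  proof (cases "finite M")
    case True
    then have "4 \<le> card M" using nf by simp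
    then show ?thesis using obtain_subset_with_card_n[OF \<open>4 \<le> card M\<close>] that by blast
  next
    case False
    then show ?thesis using infinite_arbitrarily_large[OF False, of 4] that by blast
  qed
  obtain s1 s2 s3 s4 where s: "F = {s1,s2,s3,s4}" "s1 \<noteq> s2" "s1 \<noteq> s3" "s1 \<noteq> s4"
    "s2 \<noteq> s3" "s2 \<noteq> s4" "s3 \<noteq> s4" using card4_obtain[OF F(3)] by blast
  have c: "s1 \<in> carrier G" "s2 \<in> carrier G" "s3 \<in> carrier G" "s4 \<in> carrier G"
    using F(1) s(1) assms(9) by auto
  have pat: "\<exists>x\<in>invlim G \<Gamma>. plev G \<Gamma> \<gamma> (inv s1) x = w1 \<and> plev G \<Gamma> \<gamma> (inv s2) x = w2
      \<and> plev G \<Gamma> \<gamma> (inv s3) x = w3 \<and> plev G \<Gamma> \<gamma> (inv s4) x = w4" for w1 w2 w3 w4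
  proof -
    define \<omega> where "\<omega> = (\<lambda>s. if s = s1 then w1 else if s = s2 then w2 else if s = s3 then w3 else w4)"
    have "(\<Inter>s\<in>F. {x \<in> invlim G \<Gamma>. act G s x \<in> (if \<omega> s then Xplus G \<Gamma> \<gamma> else Xminus G \<Gamma> \<gamma>)}) \<noteq> {}"
      proof -
      have "F \<subseteq> M" "F \<noteq> {}" "finite F" using F s(1) by auto
      then show ?thesis using assms(10)[unfolded indep_set_def, rule_format, of F \<omega>] by simp
    qed
    then obtain x0 where x0: "x0 \<in> (\<Inter>s\<in>F. {x \<in> invlim G \<Gamma>. act G s x \<in> (if \<omega> s then Xplus G \<Gamma> \<gamma> else Xminus G \<Gamma> \<gamma>)})"
      by blast
    define x where "x = x0"
    have x: "x \<in> invlim G \<Gamma> \<and> act G s x \<in> (if \<omega> s then Xplus G \<Gamma> \<gamma> else Xminus G \<Gamma> \<gamma>)" if "s \<in> F" for s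
      using x0 that unfolding x_def by blast
    have key: "plev G \<Gamma> \<gamma> (inv s) x = \<omega> s" if "s \<in> F" for s
    proof (cases "\<omega> s")
      case True
      then show ?thesis using L.plus_lem[of x s] x[OF that] that F(1) assms(9) by auto
    next
      case False
      then show ?thesis using L.minus_lem[of x s] x[OF that] that F(1) assms(9) by auto
    qed
    show ?thesis
    proof (rule bexI[of _ x])
      have "\<omega> s1 = w1" "\<omega> s2 = w2" "\<omega> s3 = w3" "\<omega> s4 = w4" unfolding \<omega>_def using s by auto
      moreover have "s1 \<in> F" "s2 \<in> F" "s3 \<in> F" "s4 \<in> F" using s(1) by auto
      ultimately show "plev G \<Gamma> \<gamma> (inv s1) x = w1 \<and> plev G \<Gamma> \<gamma> (inv s2) x = w2
      \<and> plev G \<Gamma> \<gamma> (inv s3) x = w3 \<and> plev G \<Gamma> \<gamma> (inv s4) x = w4" using key[of s1] key[of s2] key[of s3] key[of s4] by simp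
      show "x \<in> invlim G \<Gamma>" using x[of s1] s(1) by auto
    qed
  qed
  have d: "inv s1 \<noteq> inv s2" using s(2) c L.inv_inv by metis
  show False
    using L.four[OF L.inv_closed[OF c(1)] L.inv_closed[OF c(2)] L.inv_closed[OF c(3)] L.inv_closed[OF c(4)] d assms(7) pat] .
qed

end
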